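(* Let $A \ge B \ge C \ge 1$ be integers, $e=A+B+C-3$, $m=\lfloor\frac{e-1}{2}\rfloor$, and let $\Bbbk$ be a field. For $0\le r\le e$ let $U_r : R_r \to R_{r+1}$ be multiplication by $x+y+z$ on the degree-$r$ component of $R=\Bbbk[x,y,z]/(x^A,y^B,z^C)$. Then the maps $U_r$ for all $0\le r \le m$ are injective if and only if $U_m$ is injective.
   Context: $R$ is graded by total degree, $R_r$ denotes its degree-$r$ homogeneous component (spanned by the monomials $x^iy^jz^k$ with $i<A$, $j<B$, $k<C$, $i+j+k=r$). *)

theory Defs
  imports Main
begin

(* The degree-r component R_r of R = k[x,y,z]/(x^A,y^B,z^C) has as basis the
monomials x^i y^j z^k with i<A, j<B, k<C, i+j+k=r. An element of R_r is represented
by its coefficient function on exponent triples, vanishing off that set.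
Degrees are integers so that a negative degree gives the zero space. *)

definition box_monos :: "nat \<Rightarrow> nat \<Rightarrow> nat \<Rightarrow> int \<Rightarrow> (nat \<times> nat \<times> nat) set" where
  "box_monos A B C r = {(i,j,k). i < A \<and> j < B \<and> k < C \<and> int (i+j+k) = r}"

definition comp_space :: "nat \<Rightarrow> nat \<Rightarrow> nat \<Rightarrow> int \<Rightarrow> (nat \<times> nat \<times> nat \<Rightarrow> 'a::zero) set" where
  "comp_space A B C r = {f. \<forall>p. p \<notin> box_monos A B C r \<longrightarrow> f p = 0}"

(* U_r: multiplication by x+y+z, from R_r to R_{r+1} (terms leaving the box vanish). *)
definition mult_xyz :: "nat \<Rightarrow> nat \<Rightarrow> nat \<Rightarrow> int \<Rightarrow> (nat \<times> nat \<times> nat \<Rightarrow> 'a::field)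
    \<Rightarrow> (nat \<times> nat \<times> nat \<Rightarrow> 'a)" where
  "mult_xyz A B C r f = (\<lambda>(i,j,k).
     if (i,j,k) \<in> box_monos A B C (r+1) then
       (if 0 < i then f (i-1,j,k) else 0) + (if 0 < j then f (i,j-1,k) else 0)
       + (if 0 < k then f (i,j,k-1) else 0)
     else 0)"

end

theory Submission
  imports Defs "HOL-Library.Function_Algebras"
begin

definition shx :: "nat \<Rightarrow> nat \<Rightarrow> nat \<Rightarrow> int \<Rightarrow> (nat \<times> nat \<times> nat \<Rightarrow> 'a::field) \<Rightarrow> (nat \<times> nat \<times> nat \<Rightarrow> 'a)" where
  "shx A B C d f = (\<lambda>(i,j,k). if (i,j,k) \<in> box_monos A B C (d+1) \<and> 0 < i then f (i-1,j,k) else 0)"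
definition shy :: "nat \<Rightarrow> nat \<Rightarrow> nat \<Rightarrow> int \<Rightarrow> (nat \<times> nat \<times> nat \<Rightarrow> 'a::field) \<Rightarrow> (nat \<times> nat \<times> nat \<Rightarrow> 'a)" where
  "shy A B C d f = (\<lambda>(i,j,k). if (i,j,k) \<in> box_monos A B C (d+1) \<and> 0 < j then f (i,j-1,k) else 0)"
definition shz :: "nat \<Rightarrow> nat \<Rightarrow> nat \<Rightarrow> int \<Rightarrow> (nat \<times> nat \<times> nat \<Rightarrow> 'a::field) \<Rightarrow> (nat \<times> nat \<times> nat \<Rightarrow> 'a)" where
  "shz A B C d f = (\<lambda>(i,j,k). if (i,j,k) \<in> box_monos A B C (d+1) \<and> 0 < k then f (i,j,k-1) else 0)"

lemma comm_x: "mult_xyz A B C (d+1) (shx A B C d f) = shx A B C (d+1) (mult_xyz A B C d f)"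
  by (rule ext) (auto simp: mult_xyz_def shx_def box_monos_def)

lemma comm_y: "mult_xyz A B C (d+1) (shy A B C d f) = shy A B C (d+1) (mult_xyz A B C d f)"
  by (rule ext) (auto simp: mult_xyz_def shy_def box_monos_def)

lemma comm_z: "mult_xyz A B C (d+1) (shz A B C d f) = shz A B C (d+1) (mult_xyz A B C d f)"
  by (rule ext) (auto simp: mult_xyz_def shz_def box_monos_def)

lemma mult_diff: "mult_xyz A B C d (f - g) = mult_xyz A B C d f - mult_xyz A B C d g"
  by (rule ext) (auto simp: mult_xyz_def algebra_simps)

lemma inj_iff: "inj_on (mult_xyz A B C d :: (nat \<times> nat \<times> nat \<Rightarrow> 'a::field) \<Rightarrow> _) (comp_space A B C d)
   \<longleftrightarrow> (\<forall>f::nat \<times> nat \<times> nat \<Rightarrow> 'a. f \<in> comp_space A B C d \<longrightarrow> mult_xyz A B C d f = 0 \<longrightarrow> f = 0)"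
proof
  assume "inj_on (mult_xyz A B C d :: (nat \<times> nat \<times> nat \<Rightarrow> 'a::field) \<Rightarrow> _) (comp_space A B C d)"
  moreover have "(0::nat \<times> nat \<times> nat \<Rightarrow> 'a) \<in> comp_space A B C d" by (simp add: comp_space_def)
  moreover have "mult_xyz A B C d (0::nat \<times> nat \<times> nat \<Rightarrow> 'a) = 0" by (rule ext) (auto simp: mult_xyz_def)
  ultimately show "\<forall>f::nat \<times> nat \<times> nat \<Rightarrow> 'a. f \<in> comp_space A B C d \<longrightarrow> mult_xyz A B C d f = 0 \<longrightarrow> f = 0"
    by (metis inj_onD)
next
  assume H: "\<forall>f::nat \<times> nat \<times> nat \<Rightarrow> 'a. f \<in> comp_space A B C d \<longrightarrow> mult_xyz A B C d f = 0 \<longrightarrow> f = 0"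
  show "inj_on (mult_xyz A B C d :: (nat \<times> nat \<times> nat \<Rightarrow> 'a::field) \<Rightarrow> _) (comp_space A B C d)"
  proof (rule inj_onI)
    fix f g :: "nat \<times> nat \<times> nat \<Rightarrow> 'a"
    assume "f \<in> comp_space A B C d" "g \<in> comp_space A B C d" "mult_xyz A B C d f = mult_xyz A B C d g"
    moreover have "f - g \<in> comp_space A B C d" using calculation by (auto simp: comp_space_def)
    moreover have "mult_xyz A B C d (f - g) = 0" using mult_diff[of A B C d f g] calculation by simp
    ultimately have "f - g = 0" using H by blast
    then show "f = g" by (metis right_minus_eq)
  qed
qed

lemma step:
  fixes f :: "nat \<times> nat \<times> nat \<Rightarrow> 'a::field"
  assumes f: "f \<in> comp_space A B C d" "f \<noteq> 0" "mult_xyz A B C d f = 0"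
    and d: "d + 1 \<le> int A + int B + int C - 3"
  shows "\<exists>g::nat \<times> nat \<times> nat \<Rightarrow> 'a. g \<in> comp_space A B C (d+1) \<and> g \<noteq> 0 \<and> mult_xyz A B C (d+1) g = 0"
proof -
  obtain p where p: "f p \<noteq> 0" using f(2) by (auto simp: fun_eq_iff)
  obtain i j k where ijk: "p = (i,j,k)" by (cases p) auto
  have inb: "(i,j,k) \<in> box_monos A B C d" using f(1) p ijk by (auto simp: comp_space_def)
  have z0: "shx A B C (d+1) (0::nat \<times> nat \<times> nat \<Rightarrow> 'a) = 0" "shy A B C (d+1) (0::nat \<times> nat \<times> nat \<Rightarrow> 'a) = 0"
     "shz A B C (d+1) (0::nat \<times> nat \<times> nat \<Rightarrow> 'a) = 0"
    by (rule ext, auto simp: shx_def shy_def shz_def)+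
  have "i + 1 < A \<or> j + 1 < B \<or> k + 1 < C" using inb d by (auto simp: box_monos_def)
  moreover {
    assume "i + 1 < A"
    hence "shx A B C d f (i+1,j,k) \<noteq> 0" using inb p ijk by (auto simp: shx_def box_monos_def)
    moreover have "shx A B C d f \<in> comp_space A B C (d+1)" by (auto simp: comp_space_def shx_def)
    moreover have "shx A B C d f \<noteq> 0" using calculation(1) by (auto simp: fun_eq_iff)
    moreover have "mult_xyz A B C (d+1) (shx A B C d f) = 0" using comm_x[of A B C d f] f(3) z0 by simp
    ultimately have ?thesis by blast
  }
  moreover {
    assume "j + 1 < B"
    hence "shy A B C d f (i,j+1,k) \<noteq> 0" using inb p ijk by (auto simp: shy_def box_monos_def)
    moreover have "shy A B C d f \<in> comp_space A B C (d+1)" by (auto simp: comp_space_def shy_def)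
    moreover have "shy A B C d f \<noteq> 0" using calculation(1) by (auto simp: fun_eq_iff)
    moreover have "mult_xyz A B C (d+1) (shy A B C d f) = 0" using comm_y[of A B C d f] f(3) z0 by simp
    ultimately have ?thesis by blast
  }
  moreover {
    assume "k + 1 < C"
    hence "shz A B C d f (i,j,k+1) \<noteq> 0" using inb p ijk by (auto simp: shz_def box_monos_def)
    moreover have "shz A B C d f \<in> comp_space A B C (d+1)" by (auto simp: comp_space_def shz_def)
    moreover have "shz A B C d f \<noteq> 0" using calculation(1) by (auto simp: fun_eq_iff)
    moreover have "mult_xyz A B C (d+1) (shz A B C d f) = 0" using comm_z[of A B C d f] f(3) z0 by simp
    ultimately have ?thesis by blast
  }
  ultimately show ?thesis by blast
qed

lemma down:
  assumes "inj_on (mult_xyz A B C m :: (nat \<times> nat \<times> nat \<Rightarrow> 'a::field) \<Rightarrow> _) (comp_space A B C m)"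
    and "m \<le> int A + int B + int C - 3"
  shows "\<forall>r. r \<le> m \<longrightarrow> inj_on (mult_xyz A B C r :: (nat \<times> nat \<times> nat \<Rightarrow> 'a::field) \<Rightarrow> _) (comp_space A B C r)"
proof -
  have "\<forall>r. m - r = int n \<longrightarrow> inj_on (mult_xyz A B C r :: (nat \<times> nat \<times> nat \<Rightarrow> 'a::field) \<Rightarrow> _) (comp_space A B C r)" for n
  proof (induction n)
    case 0 then show ?case using assms(1) by auto
  next
    case (Suc n)
    show ?case
    proof (intro allI impI)
      fix r assume r: "m - r = int (Suc n)"
      have IH: "inj_on (mult_xyz A B C (r+1) :: (nat \<times> nat \<times> nat \<Rightarrow> 'a::field) \<Rightarrow> _) (comp_space A B C (r+1))"
        using Suc.IH r by (metis add_diff_cancel_left' diff_diff_eq of_nat_Suc)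
      show "inj_on (mult_xyz A B C r :: (nat \<times> nat \<times> nat \<Rightarrow> 'a::field) \<Rightarrow> _) (comp_space A B C r)"
      proof (rule ccontr)
        assume "\<not> ?thesis"
        then obtain f :: "nat \<times> nat \<times> nat \<Rightarrow> 'a" where "f \<in> comp_space A B C r" "f \<noteq> 0" "mult_xyz A B C r f = 0"
          unfolding inj_iff by blast
        then obtain g :: "nat \<times> nat \<times> nat \<Rightarrow> 'a" where "g\<in>comp_space A B C (r+1)" "g \<noteq> 0" "mult_xyz A B C (r+1) g = 0"
          using step[of f A B C r] r assms(2) by auto
        then show False using IH unfolding inj_iff by blast
      qed
    qed
  qed
  then show ?thesis by (metis le_add_diff_inverse2 nonneg_int_cases diff_ge_0_iff_ge)
qed

theorem corollary1:
  fixes A B C :: nat and e m :: int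
  assumes "A \<ge> B" and "B \<ge> C" and "C \<ge> 1"
  defines "e \<equiv> int A + int B + int C - 3"
  defines "m \<equiv> (e - 1) div 2"
  shows "(\<forall>r. 0 \<le> r \<and> r \<le> m \<longrightarrow>
            inj_on (mult_xyz A B C r :: (nat \<times> nat \<times> nat \<Rightarrow> 'a::field) \<Rightarrow> _) (comp_space A B C r))
         \<longleftrightarrow> inj_on (mult_xyz A B C m :: (nat \<times> nat \<times> nat \<Rightarrow> 'a::field) \<Rightarrow> _) (comp_space A B C m)"
proof
  assume H: "\<forall>r. 0 \<le> r \<and> r \<le> m \<longrightarrow>
            inj_on (mult_xyz A B C r :: (nat \<times> nat \<times> nat \<Rightarrow> 'a::field) \<Rightarrow> _) (comp_space A B C r)"
  show "inj_on (mult_xyz A B C m :: (nat \<times> nat \<times> nat \<Rightarrow> 'a::field) \<Rightarrow> _) (comp_space A B C m)"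
  proof (cases "0 \<le> m")
    case True then show ?thesis using H by auto
  next
    case False
    have "comp_space A B C m = {0::nat \<times> nat \<times> nat \<Rightarrow> 'a}"
      using False by (auto simp: comp_space_def box_monos_def)
    then show ?thesis by simp
  qed
next
  assume "inj_on (mult_xyz A B C m :: (nat \<times> nat \<times> nat \<Rightarrow> 'a::field) \<Rightarrow> _) (comp_space A B C m)"
  moreover have "m \<le> int A + int B + int C - 3" unfolding m_def e_def using assms(1-3) by linarith
  ultimately show "\<forall>r. 0 \<le> r \<and> r \<le> m \<longrightarrow>
            inj_on (mult_xyz A B C r :: (nat \<times> nat \<times> nat \<Rightarrow> 'a::field) \<Rightarrow> _) (comp_space A B C r)"
    using down by blast
qed

end
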